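(* Fix an arbitrary execution of Algorithm $\mathrm{tree}(G)$ on $G$, and let $r$, $U$ and $F$ be as defined in the context. If $uv$ is an edge of $G$ with $u\in U$ and $d_F(v)=1$, then $r(u)>r(v)$.
   Context: $G$ is a finite connected simple undirected graph containing a vertex $a$ with $d_G(a)\ge 2$. For a subtree $T$ of $G$ and a vertex $u$ of $T$: - $V_T(u)$ is the set of vertices $v\in V(G)\setminus V(T)$ with $uv\in E(G)$. - $E_T(u)$ is the set of edges $uv$ of $G$ with $v\in V_T(u)$. - If $|V_T(u)|=1$, then $v_T(u)$ denotes the unique vertex of $V_T(u)$. Three sets of vertices of $T$ are defined: - $W_2(T)=\{u\in V(T): |V_T(u)|\ge 2\}$. - $W_1(T)=\{u\in V(T): |V_T(u)|=1,\ |V_{T\cup E_T(u)}(v_T(u))|\ge 2\}$. - $W_0(T)=\{u\in V(T): |V_T(u)|=1,\ |V_{T\cup E_T(u)}(v_T(u))|\le 1\}$. Algorithm $\mathrm{tree}(G)$ runs as follows. 1. Start with $T=\{a\}$. 2. While $V(T)\ne V(G)$: - If $W_2(T)\ne\emptyset$, pick an arbitrary $u\in W_2(T)$. - Else, if $W_1(T)\neq\emptyset$, pick an arbitrary $u\in W_1(T)$. - Else, let $u$ be the vertex of $W_0(T)$ that joined $V(T)$ most recently. - Set $T:=T\cup E_T(u)$ ("expand $T$ at $u$"). 3. Return $T$. Now fix an execution and let $T$ be the returned spanning tree, rooted at $a$. For $v\ne a$, let $p(v)$ be the parent of $v$ in $T$. For each vertex $u$ with $d_T(u)\ge 2$, let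 $T_u$ be the tree just before the (unique) expansion at $u$. The rank $r:V(G)\to\mathbb{Z}$ is defined by $r(a)=1$ and, for each edge $uv$ of $T$ with $u=p(v)$: - $r(v)=r(u)$ if $u\in W_2(T_u)$; - $r(v)=1+\max_{w\in V(T_u)} r(w)$ otherwise. $U$ is the set of vertices $v$ such that no other vertex has rank $r(v)$. $F$ is the spanning forest obtained from $T$ by deleting every edge $uv$ with $r(u)\ne r(v)$, and $d_F(v)$ denotes the degree of $v$ in $F$. *)

theory Defs
  imports Main
begin

definition simple_graph :: "'a set \<Rightarrow> ('a \<Rightarrow> 'a \<Rightarrow> bool) \<Rightarrow> bool" where
  "simple_graph V E \<longleftrightarrow> finite V \<and> (\<forall>u v. E u v \<longrightarrow> u \<in> V \<and> v \<in> V)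
     \<and> (\<forall>u v. E u v \<longrightarrow> E v u) \<and> (\<forall>u. \<not> E u u)"

definition graph_connected :: "'a set \<Rightarrow> ('a \<Rightarrow> 'a \<Rightarrow> bool) \<Rightarrow> bool" where
  "graph_connected V E \<longleftrightarrow> V \<noteq> {} \<and> (\<forall>u\<in>V. \<forall>v\<in>V. E\<^sup>*\<^sup>* u v)"

text \<open>V_T(u), where S is the vertex set of the current tree T.\<close>
definition Vout :: "'a set \<Rightarrow> ('a \<Rightarrow> 'a \<Rightarrow> bool) \<Rightarrow> 'a set \<Rightarrow> 'a \<Rightarrow> 'a set" where
  "Vout V E S u = {v \<in> V. v \<notin> S \<and> E u v}"

definition W2 :: "'a set \<Rightarrow> ('a \<Rightarrow> 'a \<Rightarrow> bool) \<Rightarrow> 'a set \<Rightarrow> 'a set" where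
  "W2 V E S = {u \<in> S. card (Vout V E S u) \<ge> 2}"

definition W1 :: "'a set \<Rightarrow> ('a \<Rightarrow> 'a \<Rightarrow> bool) \<Rightarrow> 'a set \<Rightarrow> 'a set" where
  "W1 V E S = {u \<in> S. card (Vout V E S u) = 1 \<and>
     card (Vout V E (S \<union> Vout V E S u) (the_elem (Vout V E S u))) \<ge> 2}"

definition W0 :: "'a set \<Rightarrow> ('a \<Rightarrow> 'a \<Rightarrow> bool) \<Rightarrow> 'a set \<Rightarrow> 'a set" where
  "W0 V E S = {u \<in> S. card (Vout V E S u) = 1 \<and>
     card (Vout V E (S \<union> Vout V E S u) (the_elem (Vout V E S u))) \<le> 1}"

text \<open>An execution is recorded as the list us of vertices at which the tree was
  expanded, in order. tstate V E a us i is the vertex set of the tree after the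
  first i expansions (so tstate ... 0 = {a}).\<close>
definition tstate :: "'a set \<Rightarrow> ('a \<Rightarrow> 'a \<Rightarrow> bool) \<Rightarrow> 'a \<Rightarrow> 'a list \<Rightarrow> nat \<Rightarrow> 'a set" where
  "tstate V E a us i = foldl (\<lambda>S u. S \<union> Vout V E S u) {a} (take i us)"

definition jtime :: "'a set \<Rightarrow> ('a \<Rightarrow> 'a \<Rightarrow> bool) \<Rightarrow> 'a \<Rightarrow> 'a list \<Rightarrow> 'a \<Rightarrow> nat" where
  "jtime V E a us x = (LEAST j. x \<in> tstate V E a us j)"

definition valid_exec :: "'a set \<Rightarrow> ('a \<Rightarrow> 'a \<Rightarrow> bool) \<Rightarrow> 'a \<Rightarrow> 'a list \<Rightarrow> bool" where
  "valid_exec V E a us \<longleftrightarrow>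
     (\<forall>i < length us. let S = tstate V E a us i; u = us ! i in
        S \<noteq> V \<and>
        (if W2 V E S \<noteq> {} then u \<in> W2 V E S
         else if W1 V E S \<noteq> {} then u \<in> W1 V E S
         else u \<in> W0 V E S \<and> (\<forall>w \<in> W0 V E S. jtime V E a us w \<le> jtime V E a us u)))
     \<and> tstate V E a us (length us) = V"

definition tree_edge :: "'a set \<Rightarrow> ('a \<Rightarrow> 'a \<Rightarrow> bool) \<Rightarrow> 'a \<Rightarrow> 'a list \<Rightarrow> 'a \<Rightarrow> 'a \<Rightarrow> bool" where
  "tree_edge V E a us x y \<longleftrightarrow> (\<exists>i < length us.
      (x = us ! i \<and> y \<in> Vout V E (tstate V E a us i) x) \<or>
      (y = us ! i \<and> x \<in> Vout V E (tstate V E a us i) y))"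

text \<open>r is the rank function of the execution (the defining equations determine it uniquely).\<close>
definition is_rank :: "'a set \<Rightarrow> ('a \<Rightarrow> 'a \<Rightarrow> bool) \<Rightarrow> 'a \<Rightarrow> 'a list \<Rightarrow> ('a \<Rightarrow> int) \<Rightarrow> bool" where
  "is_rank V E a us r \<longleftrightarrow> r a = 1 \<and>
     (\<forall>i < length us. \<forall>v \<in> Vout V E (tstate V E a us i) (us ! i).
        r v = (if us ! i \<in> W2 V E (tstate V E a us i) then r (us ! i)
               else 1 + Max (r ` tstate V E a us i)))"

definition rankU :: "'a set \<Rightarrow> ('a \<Rightarrow> int) \<Rightarrow> 'a set" where
  "rankU V r = {v \<in> V. \<forall>w \<in> V. w \<noteq> v \<longrightarrow> r w \<noteq> r v}"

text \<open>Degree in the forest F (tree edges joining vertices of equal rank).\<close>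
definition degF :: "'a set \<Rightarrow> ('a \<Rightarrow> 'a \<Rightarrow> bool) \<Rightarrow> 'a \<Rightarrow> 'a list \<Rightarrow> ('a \<Rightarrow> int) \<Rightarrow> 'a \<Rightarrow> nat" where
  "degF V E a us r v = card {w \<in> V. tree_edge V E a us v w \<and> r w = r v}"

end

theory Submission
  imports Defs
begin

lemma tstate_0: "tstate V E a us 0 = {a}"
  by (simp add: tstate_def)

lemma tstate_Suc: "i < length us \<Longrightarrow>
  tstate V E a us (Suc i) = tstate V E a us i \<union> Vout V E (tstate V E a us i) (us ! i)"
  by (simp add: tstate_def take_Suc_conv_app_nth)

lemma tstate_mono: "i \<le> j \<Longrightarrow> j \<le> length us \<Longrightarrow> tstate V E a us i \<subseteq> tstate V E a us j"
proof (induction j)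
  case 0 then show ?case by simp
next
  case (Suc j)
  show ?case
  proof (cases "i = Suc j")
    case False
    then have "tstate V E a us i \<subseteq> tstate V E a us j" using Suc by simp
    also have "\<dots> \<subseteq> tstate V E a us (Suc j)" using Suc.prems tstate_Suc[of j us V E a] by auto
    finally show ?thesis .
  qed simp
qed

lemma Vout_anti: "S \<subseteq> S' \<Longrightarrow> Vout V E S' x \<subseteq> Vout V E S x"
  by (auto simp: Vout_def)

lemma Vout_fin: "finite V \<Longrightarrow> finite (Vout V E S x)"
  by (simp add: Vout_def)

lemma Vout_sub: "Vout V E S x \<subseteq> V"
  by (auto simp: Vout_def)

lemma Vout_notin: "y \<in> Vout V E S x \<Longrightarrow> y \<notin> S"
  by (auto simp: Vout_def)

lemma tstate_V: "a \<in> V \<Longrightarrow> i \<le> length us \<Longrightarrow> tstate V E a us i \<subseteq> V"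
proof (induction i)
  case 0 then show ?case by (simp add: tstate_0)
next
  case (Suc i) then show ?case using tstate_Suc[of i us V E a] Vout_sub[of V E] by auto
qed

lemma W_sub: "W2 V E S \<subseteq> S" "W1 V E S \<subseteq> S" "W0 V E S \<subseteq> S"
  by (auto simp: W2_def W1_def W0_def)

theorem lemma4:
  fixes V :: "'a set" and E :: "'a \<Rightarrow> 'a \<Rightarrow> bool" and a :: 'a
    and us :: "'a list" and r :: "'a \<Rightarrow> int" and u v :: 'a
  assumes "simple_graph V E" and "graph_connected V E"
    and "a \<in> V" and "card {w \<in> V. E a w} \<ge> 2"
    and "valid_exec V E a us"
    and "is_rank V E a us r"
    and "E u v" and "u \<in> rankU V r" and "degF V E a us r v = 1"
  shows "r u > r v"
proof -
  let ?S = "tstate V E a us"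
  let ?n = "length us"
  let ?O = "Vout V E"
  have fin: "finite V" and EV: "\<And>x y. E x y \<Longrightarrow> x \<in> V \<and> y \<in> V"
    and irr: "\<And>x. \<not> E x x"
    using assms(1) unfolding simple_graph_def by blast+
  have valid: "\<And>i. i < ?n \<Longrightarrow> ?S i \<noteq> V \<and>
        (if W2 V E (?S i) \<noteq> {} then us ! i \<in> W2 V E (?S i)
         else if W1 V E (?S i) \<noteq> {} then us ! i \<in> W1 V E (?S i)
         else us ! i \<in> W0 V E (?S i) \<and> (\<forall>w \<in> W0 V E (?S i). jtime V E a us w \<le> jtime V E a us (us ! i)))"
    using assms(5) unfolding valid_exec_def Let_def by blast
  have V2: "us ! k \<in> W2 V E (?S k)" if "k < ?n" "W2 V E (?S k) \<noteq> {}" for k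
    using conjunct2[OF valid[OF that(1)]] unfolding if_P[OF that(2)] .
  have V1: "us ! k \<in> W1 V E (?S k)" if "k < ?n" "W2 V E (?S k) = {}" "W1 V E (?S k) \<noteq> {}" for k
    using conjunct2[OF valid[OF that(1)]] that(2,3) by simp
  have V0: "us ! k \<in> W0 V E (?S k) \<and> (\<forall>w \<in> W0 V E (?S k). jtime V E a us w \<le> jtime V E a us (us ! k))"
    if "k < ?n" "W2 V E (?S k) = {}" "W1 V E (?S k) = {}" for k
    using conjunct2[OF valid[OF that(1)]] that(2,3) by simp
  have Sn: "?S ?n = V" using assms(5) unfolding valid_exec_def by blast
  have rank: "\<And>i x. i < ?n \<Longrightarrow> x \<in> ?O (?S i) (us!i) \<Longrightarrow>
      r x = (if us ! i \<in> W2 V E (?S i) then r (us ! i) else 1 + Max (r ` ?S i))"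
    using assms(6) unfolding is_rank_def by blast
  have usS: "us ! i \<in> ?S i" if h: "i < ?n" for i
    using valid[OF h] W_sub[of V E "?S i"] by (auto split: if_split_asm)
  have SV: "\<And>i. i \<le> ?n \<Longrightarrow> ?S i \<subseteq> V" using tstate_V[OF assms(3)] by blast
  have Sfin: "finite (?S i)" if "i \<le> ?n" for i using finite_subset[OF SV[OF that] fin] .
  have MaxS: "\<And>i x. i \<le> ?n \<Longrightarrow> x \<in> ?S i \<Longrightarrow> r x \<le> Max (r ` ?S i)"
    using Sfin by (simp add: Max_ge)
  have uV: "u \<in> V" and vV: "v \<in> V" using EV assms(7) by auto
  have uv: "u \<noteq> v" using irr assms(7) by auto
  have uU: "\<And>w. w \<in> V \<Longrightarrow> w \<noteq> u \<Longrightarrow> r w \<noteq> r u"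
    using assms(8) unfolding rankU_def by blast
  have Ofin: "\<And>S x. finite (?O S x)" using Vout_fin[OF fin] by blast

  have Oanti: "?O S' x \<subseteq> ?O S x" if "S \<subseteq> S'" for S S' x using Vout_anti[OF that] .
  have n0: "0 < ?n"
  proof (rule ccontr)
    assume "\<not> 0 < ?n"
    then have "?S 0 = V" using Sn by simp
    then have "V = {a}" by (simp add: tstate_0)
    then have "{w \<in> V. E a w} = {}" using irr by auto
    then show False using assms(4) by (metis card.empty not_numeral_le_zero)
  qed
  have ua: "u \<noteq> a"
  proof
    assume ua: "u = a"
    have O0: "?O (?S 0) a = {w \<in> V. E a w}" using irr by (auto simp: Vout_def tstate_0)
    have "a \<in> W2 V E (?S 0)" using O0 assms(4) by (simp add: W2_def tstate_0)
    then have ne: "W2 V E (?S 0) \<noteq> {}" by auto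
    have "us ! 0 \<in> W2 V E (?S 0)" using conjunct2[OF valid[OF n0]] unfolding if_P[OF ne] .
    then have u0: "us ! 0 = a" using W_sub[of V E "?S 0"] by (auto simp: tstate_0)
    have "{w \<in> V. E a w} \<noteq> {}" using assms(4) by (metis card.empty not_numeral_le_zero)
    then obtain w where w: "w \<in> V" "E a w" by auto
    then have "w \<in> ?O (?S 0) (us ! 0)" using O0 u0 by simp
    then have "r w = r a" using rank[OF n0] u0 \<open>us ! 0 \<in> W2 V E (?S 0)\<close> by simp
    moreover have "w \<noteq> a" using w irr by auto
    ultimately show False using uU[OF w(1)] ua by auto
  qed
  define m where "m = (LEAST k. u \<in> ?S k)"
  have um: "u \<in> ?S m" unfolding m_def by (rule LeastI[of _ ?n]) (use Sn uV in simp)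
  have mn: "m \<le> ?n" unfolding m_def by (rule Least_le) (use Sn uV in simp)
  have m0: "m \<noteq> 0"
  proof
    assume "m = 0" then show False using um ua by (simp add: tstate_0)
  qed
  define i where "i = m - 1"
  have mi: "m = Suc i" using m0 i_def by simp
  have iS: "u \<notin> ?S i" using not_less_Least[of i "\<lambda>k. u \<in> ?S k"] mi m_def by simp
  have i_n: "i < ?n" using mn mi by simp
  define p where "p = us ! i"
  have up: "u \<in> ?O (?S i) p" using um iS tstate_Suc[OF i_n] mi p_def by auto
  have pW2: "p \<notin> W2 V E (?S i)"
  proof
    assume h: "p \<in> W2 V E (?S i)"
    have "r u = r p" using rank[OF i_n] up h p_def by simp
    moreover have "p \<in> V" using usS[OF i_n] SV[of i] i_n p_def by auto
    moreover have "p \<noteq> u" using usS[OF i_n] iS p_def by auto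
    ultimately show False using uU by metis
  qed
  have W2i: "W2 V E (?S i) = {}" using V2[OF i_n] pW2 p_def by blast
  have pW10: "p \<in> W1 V E (?S i) \<or> p \<in> W0 V E (?S i)"
    using V1[OF i_n W2i] V0[OF i_n W2i] p_def by blast
  have card1: "card (?O (?S i) p) = 1" using pW10 by (auto simp: W1_def W0_def)
  have Oip: "?O (?S i) p = {u}" using card1 up by (metis card_1_singletonE singletonD)
  have ru: "r u = 1 + Max (r ` ?S i)" using rank[OF i_n] up pW2 p_def by simp
  have S1: "?S (Suc i) = insert u (?S i)" using tstate_Suc[OF i_n] Oip p_def by auto
  show ?thesis
  proof (cases "v \<in> ?S (Suc i)")
    case True
    then have "v \<in> ?S i" using S1 uv by auto
    then have "r v \<le> Max (r ` ?S i)" using MaxS i_n by simp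
    then show ?thesis using ru by simp
  next
    case vS: False
    have i1n: "Suc i < ?n"
    proof (rule ccontr)
      assume "\<not> Suc i < ?n"
      then have "Suc i = ?n" using i_n by simp
      then show False using vS Sn vV by simp
    qed
    define S' where "S' = ?S (Suc i)"
    define q where "q = us ! Suc i"
    have vO: "v \<in> ?O S' u" using vS vV assms(7) unfolding S'_def Vout_def by simp
    have uS': "u \<in> S'" using S1 S'_def by simp
    have S'fin: "finite S'" using Sfin[of "Suc i"] i1n S'_def by simp
    have Si_S': "?S i \<subseteq> S'" using S1 S'_def by auto
    have old_le1: "card (?O S' w) \<le> 1" if "w \<in> ?S i" for w
    proof -
      have "\<not> card (?O (?S i) w) \<ge> 2" using W2i that by (auto simp: W2_def)
      moreover have "card (?O S' w) \<le> card (?O (?S i) w)"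
        using card_mono[OF Ofin Oanti[OF Si_S']] .
      ultimately show ?thesis by simp
    qed
    have W2S': "W2 V E S' \<subseteq> {u}"
    proof
      fix w assume w: "w \<in> W2 V E S'"
      then have "w \<in> S'" "card (?O S' w) \<ge> 2" by (auto simp: W2_def)
      then show "w \<in> {u}" using old_le1 S1 S'_def by fastforce
    qed
    have uW2: "u \<notin> W2 V E S'"
    proof
      assume h: "u \<in> W2 V E S'"
      then have "q \<in> W2 V E S'" using V2[OF i1n] S'_def q_def by auto
      then have qu: "q = u" using W2S' by auto
      have "card (?O S' u) \<ge> 2" using h by (simp add: W2_def)
      then have "?O S' u \<noteq> {}" by auto
      then obtain w where w: "w \<in> ?O S' u" by auto
      have "r w = r u" using rank[OF i1n, of w] w qu h S'_def q_def by simp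
      moreover have "w \<in> V" "w \<noteq> u" using w uS' by (auto simp: Vout_def)
      ultimately show False using uU by metis
    qed
    have W2S'e: "W2 V E S' = {}" using W2S' uW2 by auto
    have "card (?O S' u) \<le> 1" using uW2 uS' by (auto simp: W2_def)
    then have OS'u: "?O S' u = {v}" using vO Ofin
      by (metis One_nat_def card_0_eq card_le_Suc0_iff_eq empty_iff insertI1 subsetI subset_antisym insert_subsetI singleton_iff)
    have pW1: "p \<notin> W1 V E (?S i)"
    proof
      assume h: "p \<in> W1 V E (?S i)"
      then have "card (?O (?S i \<union> ?O (?S i) p) (the_elem (?O (?S i) p))) \<ge> 2" by (simp add: W1_def)
      then have "card (?O S' u) \<ge> 2" using Oip S1 S'_def by simp
      then show False using OS'u by simp
    qed
    have W1i: "W1 V E (?S i) = {}" using V1[OF i_n W2i] pW1 p_def by blast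
    have W1S': "W1 V E S' \<subseteq> {u}"
    proof
      fix w assume w: "w \<in> W1 V E S'"
      show "w \<in> {u}"
      proof (rule ccontr)
        assume wu: "w \<notin> {u}"
        have wS: "w \<in> ?S i" using w wu S1 S'_def by (auto simp: W1_def)
        have c1: "card (?O S' w) = 1"
          and c2: "card (?O (S' \<union> ?O S' w) (the_elem (?O S' w))) \<ge> 2"
          using w by (auto simp: W1_def)
        have "\<not> card (?O (?S i) w) \<ge> 2" using W2i wS by (auto simp: W2_def)
        then have "card (?O (?S i) w) \<le> card (?O S' w)" using c1 by simp
        then have eq: "?O S' w = ?O (?S i) w" using card_seteq[OF Ofin Oanti[OF Si_S']] by blast
        have sub: "?S i \<union> ?O (?S i) w \<subseteq> S' \<union> ?O S' w" using eq Si_S' by auto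
        have "card (?O (S' \<union> ?O S' w) (the_elem (?O S' w)))
            \<le> card (?O (?S i \<union> ?O (?S i) w) (the_elem (?O (?S i) w)))"
          using card_mono[OF Ofin Oanti[OF sub]] eq by simp
        then have "w \<in> W1 V E (?S i)" using c1 c2 eq wS by (simp add: W1_def)
        then show False using W1i by simp
      qed
    qed
    define S'' where "S'' = ?S (Suc (Suc i))"
    show ?thesis
    proof (cases "u \<in> W1 V E S'")
      case True
      have "q \<in> W1 V E S'" using V1[OF i1n] W2S'e True S'_def q_def by blast
      then have qu: "q = u" using W1S' by auto
      have S2: "S'' = insert v S'" using tstate_Suc[OF i1n] qu OS'u S'_def S''_def q_def by auto
      have c2: "card (?O S'' v) \<ge> 2" using True OS'u S2 by (simp add: W1_def)
      have i2n: "Suc (Suc i) < ?n"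
      proof (rule ccontr)
        assume "\<not> Suc (Suc i) < ?n"
        then have "Suc (Suc i) = ?n" using i1n by simp
        then have "S'' = V" using Sn S''_def by simp
        then have "?O S'' v = {}" by (auto simp: Vout_def)
        then show False using c2 by simp
      qed
      have vS'': "v \<in> S''" using S2 by simp
      have "W2 V E S'' \<subseteq> {v}"
      proof
        fix w assume w: "w \<in> W2 V E S''"
        then have wS: "w \<in> S''" and cw: "card (?O S'' w) \<ge> 2" by (auto simp: W2_def)
        show "w \<in> {v}"
        proof (rule ccontr)
          assume "w \<notin> {v}"
          then have "w \<in> S'" using wS S2 by auto
          then have "\<not> card (?O S' w) \<ge> 2" using W2S'e by (auto simp: W2_def)
          moreover have "card (?O S'' w) \<le> card (?O S' w)"
            using card_mono[OF Ofin Oanti[of S' S'' w]] S2 by auto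
          ultimately show False using cw by simp
        qed
      qed
      moreover have vW2: "v \<in> W2 V E S''" using vS'' c2 by (simp add: W2_def)
      ultimately have qv: "us ! Suc (Suc i) = v" using V2[OF i2n] S''_def by auto
      have "?O S'' v \<subseteq> {w \<in> V. tree_edge V E a us v w \<and> r w = r v}"
      proof
        fix w assume w: "w \<in> ?O S'' v"
        have "r w = r v" using rank[OF i2n, of w] w qv vW2 S''_def by simp
        moreover have "tree_edge V E a us v w" unfolding tree_edge_def
          using i2n w qv S''_def by metis
        moreover have "w \<in> V" using w by (simp add: Vout_def)
        ultimately show "w \<in> {w \<in> V. tree_edge V E a us v w \<and> r w = r v}" by simp
      qed
      then have "card (?O S'' v) \<le> degF V E a us r v" unfolding degF_def
        by (rule card_mono[rotated]) (use fin in simp)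
      then show ?thesis using c2 assms(9) by simp
    next
      case False
      have W1S'e: "W1 V E S' = {}" using W1S' False by auto
      have uW0: "u \<in> W0 V E S'" using False uS' OS'u by (auto simp: W0_def W1_def)
      have q0: "q \<in> W0 V E S'" and jq: "jtime V E a us u \<le> jtime V E a us q"
        using V0[OF i1n] W2S'e W1S'e uW0 S'_def q_def by auto
      have ju: "jtime V E a us u = Suc i" unfolding jtime_def using m_def mi by simp
      have qS': "q \<in> S'" using usS[OF i1n] S'_def q_def by simp
      have "q \<notin> ?S i"
      proof
        assume "q \<in> ?S i"
        then have "jtime V E a us q \<le> i" unfolding jtime_def by (rule Least_le)
        then show False using jq ju by simp
      qed
      then have qu: "q = u" using qS' S1 S'_def by auto
      have S2: "S'' = insert v S'" using tstate_Suc[OF i1n] qu OS'u S'_def S''_def q_def by auto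
      have c1: "card (?O S'' v) \<le> 1" using uW0 OS'u S2 by (simp add: W0_def)
      have rv: "r v = 1 + Max (r ` S')" using rank[OF i1n, of v] vO qu uW2 S'_def q_def by simp
      have "r u \<le> Max (r ` S')" using MaxS[of "Suc i" u] i1n uS' S'_def by simp
      then have rvu: "r u < r v" using rv by simp
      have "{w \<in> V. tree_edge V E a us v w \<and> r w = r v} \<noteq> {}"
        using assms(9) unfolding degF_def by (metis card.empty zero_neq_one)
      then obtain w j where w: "w \<in> V" "r w = r v" and j: "j < ?n" and
         tj: "(v = us ! j \<and> w \<in> ?O (?S j) v) \<or> (w = us ! j \<and> v \<in> ?O (?S j) w)"
        unfolding tree_edge_def by blast
      from tj have False
      proof
        assume h: "v = us ! j \<and> w \<in> ?O (?S j) v"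
        from h have vj: "us ! j = v" and wO: "w \<in> ?O (?S j) v" by auto
        have vSj: "v \<in> ?S j" using usS[OF j] vj by simp
        have "Suc (Suc i) \<le> j"
        proof (rule ccontr)
          assume "\<not> Suc (Suc i) \<le> j"
          then have "?S j \<subseteq> S'" using tstate_mono[of j "Suc i" us] i1n S'_def by simp
          then show False using vSj vS S'_def by auto
        qed
        then have "S'' \<subseteq> ?S j" using tstate_mono[of "Suc (Suc i)" j us V E a] j S''_def by simp
        then have "card (?O (?S j) v) \<le> 1" using card_mono[OF Ofin Oanti[of S'' "?S j" v]] c1 by simp
        then have "v \<notin> W2 V E (?S j)" by (simp add: W2_def)
        then have "r w = 1 + Max (r ` ?S j)" using rank[OF j, of w] wO vj by simp
        moreover have "r v \<le> Max (r ` ?S j)" using MaxS j vSj by simp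
        ultimately show False using w(2) by simp
      next
        assume h: "w = us ! j \<and> v \<in> ?O (?S j) w"
        from h have wj: "us ! j = w" and vO': "v \<in> ?O (?S j) w" by auto
        have v1: "v \<in> ?S (Suc j)" using tstate_Suc[OF j] wj vO' by auto
        have v2: "v \<notin> ?S j" using vO' by (simp add: Vout_def)
        have "j = Suc i"
        proof (rule ccontr)
          assume "j \<noteq> Suc i"
          then consider "j < Suc i" | "Suc (Suc i) \<le> j" by linarith
          then show False
          proof cases
            case 1 then have "?S (Suc j) \<subseteq> S'" using tstate_mono[of "Suc j" "Suc i" us V E a] i1n S'_def by simp
            then show False using v1 vS S'_def by auto
          next
            case 2 then have "S'' \<subseteq> ?S j" using tstate_mono[of "Suc (Suc i)" j us V E a] j S''_def by simp
            then show False using v2 S2 by auto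
          qed
        qed
        then have "w = u" using wj qu q_def by simp
        then show False using w(2) rvu by simp
      qed
      then show ?thesis by simp
    qed
  qed

qed

end
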